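(* Assume there exists a $1$-perfect code in $H(q+1,q)$. Let $f$ be a $(b,c)$-coloring of $H(n,q)$ with main eigenvalue $\lambda\le0$. Then for all $t_1,t_2\in\{0,\dots,q\}$ with $t_1+t_2\notin\{0,2q\}$ there exists a $\big(q(b+c)-(ct_1+bt_2),\ ct_1+bt_2\big)$-coloring $F$ of $H(qn-\lambda,q)$, and $F$ has main eigenvalue $\lambda$.
   Context: The Hamming graph $H(n,q)$ has vertex set $\mathbb{Z}_q^n$, two vertices adjacent iff they differ in exactly one coordinate. A perfect $2$-coloring is a surjective map onto $\{1,2\}$ such that each vertex of color $i$ has a constant number of neighbours of each color. A $(b,c)$-coloring of $H(n,q)$ is a perfect $2$-coloring in which each color-1 vertex has exactly $b$ neighbours of color 2 and each color-2 vertex has exactly $c$ neighbours of color 1; its main eigenvalue is $\lambda=n(q-1)-(b+c)$. A $1$-perfect code in $H(n,q)$ is a set $C$ of vertices such that every radius-$1$ Hamming ball contains exactly one element of $C$. *)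

theory Defs
  imports Main
begin

definition hamming_vertices :: "nat \<Rightarrow> nat \<Rightarrow> nat list set" where
  "hamming_vertices n q = {x. length x = n \<and> set x \<subseteq> {..<q}}"

definition hamming_dist :: "nat list \<Rightarrow> nat list \<Rightarrow> nat" where
  "hamming_dist x y = card {i. i < length x \<and> x ! i \<noteq> y ! i}"

definition hamming_adj :: "nat list \<Rightarrow> nat list \<Rightarrow> bool" where
  "hamming_adj x y \<longleftrightarrow> hamming_dist x y = 1"

definition nbr_count :: "nat \<Rightarrow> nat \<Rightarrow> (nat list \<Rightarrow> nat) \<Rightarrow> nat list \<Rightarrow> nat \<Rightarrow> nat" where
  "nbr_count n q f x i = card {y \<in> hamming_vertices n q. hamming_adj x y \<and> f y = i}"

definition perfect_2_coloring :: "nat \<Rightarrow> nat \<Rightarrow> (nat list \<Rightarrow> nat) \<Rightarrow> bool" where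
  "perfect_2_coloring n q f \<longleftrightarrow>
     f ` hamming_vertices n q = {1, 2} \<and>
     (\<forall>i\<in>{1,2::nat}. \<forall>j\<in>{1,2::nat}. \<exists>m. \<forall>x\<in>hamming_vertices n q.
         f x = i \<longrightarrow> nbr_count n q f x j = m)"

definition bc_coloring :: "nat \<Rightarrow> nat \<Rightarrow> nat \<Rightarrow> nat \<Rightarrow> (nat list \<Rightarrow> nat) \<Rightarrow> bool" where
  "bc_coloring n q b c f \<longleftrightarrow>
     perfect_2_coloring n q f \<and>
     (\<forall>x\<in>hamming_vertices n q. f x = 1 \<longrightarrow> nbr_count n q f x 2 = b) \<and>
     (\<forall>x\<in>hamming_vertices n q. f x = 2 \<longrightarrow> nbr_count n q f x 1 = c)"

definition main_eigenvalue :: "nat \<Rightarrow> nat \<Rightarrow> nat \<Rightarrow> nat \<Rightarrow> int" where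
  "main_eigenvalue n q b c = int n * (int q - 1) - (int b + int c)"

definition perfect_code_1 :: "nat \<Rightarrow> nat \<Rightarrow> nat list set \<Rightarrow> bool" where
  "perfect_code_1 n q C \<longleftrightarrow> C \<subseteq> hamming_vertices n q \<and>
     (\<forall>x\<in>hamming_vertices n q. \<exists>!y. y \<in> C \<and> hamming_dist x y \<le> 1)"

end

theory Submission
  imports Defs
begin


lemma hd_set_eq: "{i. i < length x \<and> x ! i \<noteq> y ! i} \<subseteq> {..<length x}" by auto

lemma hdist0: "length x = length y \<Longrightarrow> hamming_dist x y = 0 \<longleftrightarrow> x = y"
  unfolding hamming_dist_def
  by (auto intro: nth_equalityI)

lemma hdist_le1:
  assumes "length x = length y" "\<forall>i<length x. i \<noteq> k \<longrightarrow> x!i = y!i"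
  shows "hamming_dist x y \<le> 1"
proof -
  have "{i. i < length x \<and> x ! i \<noteq> y ! i} \<subseteq> {k}" using assms by auto
  then have "card {i. i < length x \<and> x ! i \<noteq> y ! i} \<le> card {k}" by (intro card_mono) auto
  then show ?thesis unfolding hamming_dist_def by simp
qed

lemma hdist1_D:
  assumes "hamming_dist x y = 1"
  shows "\<exists>k<length x. x!k \<noteq> y!k \<and> (\<forall>i<length x. i \<noteq> k \<longrightarrow> x!i = y!i)"
proof -
  from assms obtain k where k: "{i. i < length x \<and> x ! i \<noteq> y ! i} = {k}"
    unfolding hamming_dist_def by (auto simp: card_Suc_eq)
  then have "k < length x" "x!k \<noteq> y!k" by auto
  moreover have "\<forall>i<length x. i \<noteq> k \<longrightarrow> x!i = y!i" using k by auto
  ultimately show ?thesis by blast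
qed

lemma hdist_upd:
  assumes "k < length x" "v \<noteq> x!k"
  shows "hamming_dist x (x[k:=v]) = 1"
proof -
  have "{i. i < length x \<and> x ! i \<noteq> x[k:=v] ! i} = {k}" using assms by (auto simp: nth_list_update)
  then show ?thesis unfolding hamming_dist_def by simp
qed

lemma hdist_snoc:
  assumes "length xs = length ys"
  shows "hamming_dist (xs@[a]) (ys@[b]) = hamming_dist xs ys + (if a = b then 0 else 1)"
proof -
  let ?S = "{i. i < length xs \<and> xs ! i \<noteq> ys ! i}"
  have fin: "finite ?S" by auto
  have eq: "{i. i < length (xs@[a]) \<and> (xs@[a]) ! i \<noteq> (ys@[b]) ! i} = ?S \<union> (if a = b then {} else {length xs})"
    using assms by (auto simp: nth_append less_Suc_eq split: if_splits)
  show ?thesis unfolding hamming_dist_def eq using fin by auto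
qed

lemma hdist_sym: "length x = length y \<Longrightarrow> hamming_dist x y = hamming_dist y x"
  unfolding hamming_dist_def by metis

lemma hv_nth: "x \<in> hamming_vertices n q \<Longrightarrow> i < n \<Longrightarrow> x!i < q"
  unfolding hamming_vertices_def by (auto dest: nth_mem)

lemma hv_len: "x \<in> hamming_vertices n q \<Longrightarrow> length x = n"
  unfolding hamming_vertices_def by auto

lemma finite_hv: "finite (hamming_vertices n q)"
proof -
  have "hamming_vertices n q = {xs. set xs \<subseteq> {..<q} \<and> length xs = n}"
    unfolding hamming_vertices_def by auto
  then show ?thesis using finite_lists_length_eq[of "{..<q}" n] by simp
qed

definition nbrs :: "nat \<Rightarrow> nat \<Rightarrow> nat list \<Rightarrow> nat list set" where
  "nbrs n q x = {y \<in> hamming_vertices n q. hamming_adj x y}"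

lemma nbrs_image:
  assumes "x \<in> hamming_vertices n q"
  shows "nbrs n q x = (\<lambda>(j,v). x[j:=v]) ` (SIGMA j:{..<n}. {..<q} - {x!j})"
proof
  show "nbrs n q x \<subseteq> (\<lambda>(j,v). x[j:=v]) ` (SIGMA j:{..<n}. {..<q} - {x!j})"
  proof
    fix y assume y: "y \<in> nbrs n q x"
    then have yv: "y \<in> hamming_vertices n q" and "hamming_dist x y = 1"
      unfolding nbrs_def hamming_adj_def by auto
    then obtain k where k: "k<length x" "x!k \<noteq> y!k" "\<forall>i<length x. i \<noteq> k \<longrightarrow> x!i = y!i"
      using hdist1_D by blast
    have lx: "length x = n" "length y = n" using assms yv unfolding hamming_vertices_def by auto
    have "y = x[k := y!k]" using k lx by (auto intro!: nth_equalityI simp: nth_list_update)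
    moreover have "y!k < q" using yv k lx hv_nth by auto
    ultimately show "y \<in> (\<lambda>(j,v). x[j:=v]) ` (SIGMA j:{..<n}. {..<q} - {x!j})"
      using k lx by (intro image_eqI[of _ _ "(k, y!k)"]) auto
  qed
next
  show "(\<lambda>(j,v). x[j:=v]) ` (SIGMA j:{..<n}. {..<q} - {x!j}) \<subseteq> nbrs n q x"
  proof
    fix y assume "y \<in> (\<lambda>(j,v). x[j:=v]) ` (SIGMA j:{..<n}. {..<q} - {x!j})"
    then obtain j v where y: "y = x[j:=v]" "j < n" "v \<in> {..<q} - {x!j}" by auto
    then show "y \<in> nbrs n q x" using assms
      unfolding nbrs_def hamming_vertices_def hamming_adj_def
      by (auto simp: hdist_upd dest: set_update_subset_insert[THEN subsetD])
  qed
qed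

lemma nbrs_inj:
  "inj_on (\<lambda>(j,v). x[j:=v]) (SIGMA j:{..<length x}. {..<q} - {x!j})"
proof (rule inj_onI)
  fix p p' assume pp: "p \<in> (SIGMA j:{..<length x}. {..<q} - {x!j})" "p' \<in> (SIGMA j:{..<length x}. {..<q} - {x!j})"
    "(\<lambda>(j,v). x[j:=v]) p = (\<lambda>(j,v). x[j:=v]) p'"
  obtain j v j' v' where pv: "p = (j,v)" "p' = (j',v')" by fastforce
  have a: "j < length x" "v \<in> {..<q} - {x!j}" "j' < length x" "v' \<in> {..<q} - {x!j'}"
    "x[j:=v] = x[j':=v']" using pp pv by auto
  show "p = p'"
  proof (cases "j = j'")
    case True then show ?thesis using a pv by (metis nth_list_update_eq)
  next
    case False
    have h1: "x[j:=v] ! j = v" using a(1) by simp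
    have h2: "x[j':=v'] ! j = x ! j" using False by simp
    have "v = x!j" using h1 h2 a(5) by metis
    then show ?thesis using a(2) by simp
  qed
qed

lemma sum_nbrs:
  assumes "x \<in> hamming_vertices n q"
  shows "(\<Sum>y\<in>nbrs n q x. g y) = (\<Sum>j<n. \<Sum>v\<in>{..<q} - {x!j}. g (x[j:=v]))"
proof -
  have lx: "length x = n" using assms unfolding hamming_vertices_def by auto
  have "(\<Sum>y\<in>nbrs n q x. g y) = (\<Sum>p\<in>(SIGMA j:{..<n}. {..<q} - {x!j}). g ((\<lambda>(j,v). x[j:=v]) p))"
    unfolding nbrs_image[OF assms] using nbrs_inj[of x q] lx by (subst sum.reindex) auto
  also have "\<dots> = (\<Sum>j<n. \<Sum>v\<in>{..<q} - {x!j}. g (x[j:=v]))"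
    by (subst sum.Sigma) (auto simp: case_prod_beta)
  finally show ?thesis .
qed

lemma card_nbrs:
  assumes "x \<in> hamming_vertices n q"
  shows "card (nbrs n q x) = n * (q - 1)"
proof -
  have "card (nbrs n q x) = (\<Sum>y\<in>nbrs n q x. 1)" by simp
  also have "\<dots> = (\<Sum>j<n. \<Sum>v\<in>{..<q} - {x!j}. 1)" by (rule sum_nbrs[OF assms])
  also have "\<dots> = (\<Sum>j<n. q - 1)"
  proof (rule sum.cong)
    fix j assume "j \<in> {..<n}"
    then have "x!j < q" using assms unfolding hamming_vertices_def by (auto dest: nth_mem)
    then show "(\<Sum>v\<in>{..<q} - {x!j}. 1) = q - 1" by simp
  qed simp
  finally show ?thesis by simp
qed

lemma nbr_count_sum:
  "nbr_count n q f x i = (\<Sum>y\<in>nbrs n q x. if f y = i then 1 else 0)"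
proof -
  have "nbr_count n q f x i = card {y \<in> nbrs n q x. f y = i}"
    unfolding nbr_count_def nbrs_def by (rule arg_cong[where f=card]) auto
  also have "\<dots> = (\<Sum>y\<in>nbrs n q x. if f y = i then 1 else 0)"
    using finite_hv[of n q] unfolding nbrs_def by (subst sum.inter_filter[symmetric]) auto
  finally show ?thesis .
qed



lemma hdist_snoc2:
  assumes "length xs = length ys"
  shows "hamming_dist (xs@[a,b]) (ys@[a',b']) = hamming_dist xs ys + (if a = a' then 0 else 1) + (if b = b' then 0 else 1)"
proof -
  have "hamming_dist (xs@[a,b]) (ys@[a',b']) = hamming_dist ((xs@[a])@[b]) ((ys@[a'])@[b'])" by simp
  also have "\<dots> = hamming_dist (xs@[a]) (ys@[a']) + (if b = b' then 0 else 1)"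
    using assms by (intro hdist_snoc) simp
  also have "\<dots> = hamming_dist xs ys + (if a = a' then 0 else 1) + (if b = b' then 0 else 1)"
    using assms by (simp add: hdist_snoc)
  finally show ?thesis .
qed

lemma hv_snoc: "(xs@[a] \<in> hamming_vertices (Suc n) q) \<longleftrightarrow> xs \<in> hamming_vertices n q \<and> a < q"
  unfolding hamming_vertices_def by auto

lemma hv_snoc2: "(xs@[a,b] \<in> hamming_vertices (Suc (Suc n)) q) \<longleftrightarrow> xs \<in> hamming_vertices n q \<and> a < q \<and> b < q"
  unfolding hamming_vertices_def by auto

lemma hv_take: "x \<in> hamming_vertices n q \<Longrightarrow> k \<le> n \<Longrightarrow> take k x \<in> hamming_vertices k q"
  unfolding hamming_vertices_def by (auto dest: in_set_takeD)

lemma mod_lemma1: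
  fixes y a p q :: nat
  assumes "a < q" "y < q" "p < q"
  shows "(y + q - a) mod q = p \<longleftrightarrow> (y + q - p) mod q = a"
proof -
  have e1: "(y + q - a) mod q = (if a \<le> y then y - a else y + q - a)"
    using assms by (auto simp: le_mod_geq mod_if)
  have e2: "(y + q - p) mod q = (if p \<le> y then y - p else y + q - p)"
    using assms by (auto simp: le_mod_geq mod_if)
  show ?thesis unfolding e1 e2 using assms by auto
qed

lemma mod_lemma2:
  fixes y p q :: nat
  assumes "y < q" "p < q"
  shows "((y + p) mod q + q - p) mod q = y"
proof -
  have "(y + p) mod q = (if y + p < q then y + p else y + p - q)"
    using assms by (auto simp: mod_if le_mod_geq)
  then show ?thesis using assms by (auto simp: mod_if le_mod_geq)
qed

locale pcode =
  fixes q :: nat and C :: "nat list set"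
  assumes pc: "perfect_code_1 (Suc q) q C" and q2: "q \<ge> 2"
begin

lemma C_sub: "C \<subseteq> hamming_vertices (Suc q) q" using pc unfolding perfect_code_1_def by auto

lemma C_uniq:
  assumes "c \<in> C" "c' \<in> C" "w \<in> hamming_vertices (Suc q) q" "hamming_dist w c \<le> 1" "hamming_dist w c' \<le> 1"
  shows "c = c'"
  using pc assms unfolding perfect_code_1_def by blast

lemma C_ex:
  assumes "w \<in> hamming_vertices (Suc q) q"
  obtains c where "c \<in> C" "hamming_dist w c \<le> 1"
  using pc assms unfolding perfect_code_1_def by blast

lemma qeq: "Suc (Suc (q - 2)) = q" "Suc (q - 1) = q" "Suc (Suc (q - 1)) = Suc q" using q2 by auto

lemma C_decomp:
  assumes "c \<in> C"
  shows "c = take (q-1) c @ [c!(q-1), c!q]"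
proof -
  have l: "length c = Suc q" using C_sub assms hv_len by blast
  show ?thesis using l q2
    by (intro nth_equalityI) (auto simp: nth_append less_Suc_eq numeral_2_eq_2 dest!: less_imp_Suc_add)
qed

lemma prefix_ex:
  assumes x0: "x0 \<in> hamming_vertices (q-1) q"
  shows "\<exists>c\<in>C. take (q-1) c = x0"
proof (rule ccontr)
  assume nex: "\<not> ?thesis"
  have lx0: "length x0 = q - 1" using x0 hv_len by blast
  define g where "g = (\<lambda>(y,z). SOME c. c \<in> C \<and> hamming_dist (x0@[y,z]) c \<le> 1)"
  have gprop: "g (y,z) \<in> C \<and> g (y,z) = take (q-1) (g (y,z)) @ [y,z] \<and> take (q-1) (g (y,z)) \<in> nbrs (q-1) q x0"
    if yz: "y < q" "z < q" for y z
  proof -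
    have pt: "x0@[y,z] \<in> hamming_vertices (Suc q) q"
      using hv_snoc2[of x0 y z "q-1" q] x0 yz qeq by simp
    obtain c where c: "c \<in> C" "hamming_dist (x0@[y,z]) c \<le> 1" using C_ex[OF pt] by blast
    have "\<exists>c. c \<in> C \<and> hamming_dist (x0@[y,z]) c \<le> 1" using c by blast
    then have "(SOME c. c \<in> C \<and> hamming_dist (x0@[y,z]) c \<le> 1) \<in> C \<and>
       hamming_dist (x0@[y,z]) (SOME c. c \<in> C \<and> hamming_dist (x0@[y,z]) c \<le> 1) \<le> 1" by (rule someI_ex)
    then have gc: "g (y,z) \<in> C \<and> hamming_dist (x0@[y,z]) (g (y,z)) \<le> 1"
      unfolding g_def by simp
    let ?c = "g (y,z)"
    have dec: "?c = take (q-1) ?c @ [?c!(q-1), ?c!q]" using C_decomp gc by blast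
    have lc: "length (take (q-1) ?c) = q - 1" using gc C_sub hv_len q2 by fastforce
    have "take (q-1) ?c \<noteq> x0" using nex gc by blast
    then have d0: "hamming_dist x0 (take (q-1) ?c) \<noteq> 0" using hdist0 lx0 lc by metis
    have "hamming_dist (x0@[y,z]) ?c = hamming_dist x0 (take (q-1) ?c) + (if y = ?c!(q-1) then 0 else 1) + (if z = ?c!q then 0 else 1)"
      by (subst dec, rule hdist_snoc2) (use lx0 lc in simp)
    then have "hamming_dist x0 (take (q-1) ?c) = 1 \<and> y = ?c!(q-1) \<and> z = ?c!q"
      using gc d0 by (auto split: if_splits)
    moreover have "take (q-1) ?c \<in> hamming_vertices (q-1) q"
      using gc C_sub hv_take[of ?c "Suc q" q "q-1"] by auto
    ultimately show ?thesis using gc dec unfolding nbrs_def hamming_adj_def by auto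
  qed
  define h where "h = (\<lambda>p. take (q-1) (g p))"
  have inj: "inj_on h ({..<q} \<times> {..<q})"
  proof (rule inj_onI)
    fix p p' assume pp: "p \<in> {..<q} \<times> {..<q}" "p' \<in> {..<q} \<times> {..<q}" "h p = h p'"
    obtain y z y' z' where pv: "p = (y,z)" "p' = (y',z')" by fastforce
    have yz: "y < q" "z < q" "y' < q" "z' < q" using pp pv by auto
    let ?x1 = "h p"
    have c1: "g (y,z) = ?x1 @ [y,z]" "g (y,z) \<in> C" using gprop[OF yz(1,2)] pv unfolding h_def by auto
    have c2: "g (y',z') = ?x1 @ [y',z']" "g (y',z') \<in> C" using gprop[OF yz(3,4)] pv pp(3) unfolding h_def by auto
    have x1v: "?x1 \<in> hamming_vertices (q-1) q" using gprop[OF yz(1,2)] pv unfolding h_def nbrs_def by auto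
    have lx1: "length ?x1 = q - 1" using x1v hv_len by blast
    have w: "?x1 @ [y,z'] \<in> hamming_vertices (Suc q) q"
      using hv_snoc2[of ?x1 y z' "q-1" q] x1v yz qeq by simp
    have "hamming_dist (?x1 @ [y,z']) (?x1 @ [y,z]) \<le> 1"
      using hdist_snoc2[of ?x1 ?x1 y z' y z] hdist0[of ?x1 ?x1] by simp
    moreover have "hamming_dist (?x1 @ [y,z']) (?x1 @ [y',z']) \<le> 1"
      using hdist_snoc2[of ?x1 ?x1 y z' y' z'] hdist0[of ?x1 ?x1] by simp
    ultimately have "?x1 @ [y,z] = ?x1 @ [y',z']" using C_uniq[OF _ _ w] c1 c2 by metis
    then show "p = p'" using pv by simp
  qed
  have "h ` ({..<q} \<times> {..<q}) \<subseteq> nbrs (q-1) q x0" using gprop unfolding h_def by auto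
  then have "card (h ` ({..<q} \<times> {..<q})) \<le> card (nbrs (q-1) q x0)"
    by (intro card_mono) (auto simp: nbrs_def intro: finite_subset[OF _ finite_hv])
  then have "q * q \<le> (q-1) * (q-1)"
    using card_image[OF inj] card_nbrs[OF x0] by (simp add: card_cartesian_product)
  moreover have "(q-1) * (q-1) < q * q" using q2 by (intro mult_strict_mono) auto
  ultimately show False by simp
qed

definition cw :: "nat list \<Rightarrow> nat list" where
  "cw x0 = (THE c. c \<in> C \<and> take (q-1) c = x0)"

lemma prefix_uniq:
  assumes "c \<in> C" "c' \<in> C" "take (q-1) c = take (q-1) c'"
  shows "c = c'"
proof -
  let ?x = "take (q-1) c"
  have lx: "length ?x = q - 1" using assms C_sub hv_len q2 by fastforce
  have xv: "?x \<in> hamming_vertices (q-1) q" using assms C_sub hv_take[of c "Suc q" q "q-1"] by auto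
  have d1: "c = ?x @ [c!(q-1), c!q]" using C_decomp assms by blast
  have d2: "c' = ?x @ [c'!(q-1), c'!q]" using C_decomp assms by metis
  have w: "?x @ [c!(q-1), c'!q] \<in> hamming_vertices (Suc q) q"
  proof -
    have "c!(q-1) < q" "c'!q < q" using assms C_sub hv_nth q2 by (fastforce+)
    then have "?x @ [c!(q-1), c'!q] \<in> hamming_vertices (Suc (Suc (q-1))) q" using hv_snoc2[of ?x] xv by blast
    then show ?thesis using qeq(3) by metis
  qed
  have "hamming_dist (?x @ [c!(q-1), c'!q]) c \<le> 1"
    by (subst d1) (use hdist_snoc2[of ?x ?x] hdist0[of ?x ?x] in simp)
  moreover have "hamming_dist (?x @ [c!(q-1), c'!q]) c' \<le> 1"
    by (subst d2) (use hdist_snoc2[of ?x ?x] hdist0[of ?x ?x] in simp)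
  ultimately show ?thesis using C_uniq[OF assms(1,2) w] by blast
qed

lemma cw_prop:
  assumes "x0 \<in> hamming_vertices (q-1) q"
  shows "cw x0 \<in> C" "take (q-1) (cw x0) = x0"
proof -
  obtain c where c: "c \<in> C" "take (q-1) c = x0" using prefix_ex[OF assms] by blast
  have "cw x0 = c" unfolding cw_def
    by (rule the_equality) (use c prefix_uniq in auto)
  then show "cw x0 \<in> C" "take (q-1) (cw x0) = x0" using c by auto
qed

lemma cw_eq: "c \<in> C \<Longrightarrow> cw (take (q-1) c) = c"
  using cw_prop[of "take (q-1) c"] prefix_uniq C_sub hv_take[of c "Suc q" q "q-1"] by auto

definition A :: "nat list \<Rightarrow> nat" where "A x0 = cw x0 ! (q-1)"
definition B :: "nat list \<Rightarrow> nat" where "B x0 = cw x0 ! q"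

lemma cw_form:
  assumes "x0 \<in> hamming_vertices (q-1) q"
  shows "cw x0 = x0 @ [A x0, B x0]" "A x0 < q" "B x0 < q"
proof -
  show "cw x0 = x0 @ [A x0, B x0]" using C_decomp[OF cw_prop(1)[OF assms]] cw_prop(2)[OF assms]
    unfolding A_def B_def by metis
  show "A x0 < q" "B x0 < q" using cw_prop(1)[OF assms] C_sub hv_nth q2 unfolding A_def B_def by fastforce+
qed

end


lemma mod_lemma3:
  fixes a p q :: nat
  assumes "a < q" "p < q"
  shows "((a + q - p) mod q + p) mod q = a"
proof -
  have "(a + q - p) mod q = (if p \<le> a then a - p else a + q - p)"
    using assms by (auto simp: le_mod_geq mod_if)
  then show ?thesis using assms by (auto simp: mod_if le_mod_geq)
qed

lemma bij_betw_ex1: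
  assumes "\<forall>x\<in>S. f x \<in> T" "\<forall>y\<in>T. \<exists>!x. x \<in> S \<and> f x = y"
  shows "bij_betw f S T"
  unfolding bij_betw_def inj_on_def using assms by (auto; metis)

context pcode begin

definition pre :: "nat list \<Rightarrow> nat list" where "pre u = take (q-1) u"
definition lst :: "nat list \<Rightarrow> nat" where "lst u = u ! (q-1)"
definition pi :: "nat list \<Rightarrow> nat" where "pi u = (lst u + q - A (pre u)) mod q"
definition rho :: "nat list \<Rightarrow> nat" where "rho u = B (pre u)"
definition M :: "nat \<Rightarrow> nat list \<Rightarrow> nat list" where "M p u = pre u @ [(lst u + q - p) mod q]"

lemma u_dec:
  assumes "u \<in> hamming_vertices q q"
  shows "u = pre u @ [lst u]" "pre u \<in> hamming_vertices (q-1) q" "lst u < q"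
proof -
  have l: "length u = q" using assms hv_len by blast
  show "u = pre u @ [lst u]" unfolding pre_def lst_def using l q2
    by (intro nth_equalityI) (auto simp: nth_append less_Suc_eq dest!: less_imp_Suc_add)
  show "pre u \<in> hamming_vertices (q-1) q" unfolding pre_def using hv_take[OF assms] by simp
  show "lst u < q" unfolding lst_def using hv_nth[OF assms] q2 by simp
qed

lemma pi_lt: "pi u < q" unfolding pi_def using q2 by simp
lemma rho_lt: "u \<in> hamming_vertices q q \<Longrightarrow> rho u < q" unfolding rho_def using cw_form u_dec by blast

lemma pre_app: "length xs = q - 1 \<Longrightarrow> pre (xs @ [a]) = xs" unfolding pre_def by simp
lemma lst_app: "length xs = q - 1 \<Longrightarrow> lst (xs @ [a]) = a" unfolding lst_def by (simp add: nth_append)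

lemma M_V: "u \<in> hamming_vertices q q \<Longrightarrow> M p u \<in> hamming_vertices q q"
proof -
  assume u: "u \<in> hamming_vertices q q"
  have "M p u \<in> hamming_vertices (Suc (q-1)) q" unfolding M_def
    using hv_snoc[of "pre u" "(lst u + q - p) mod q" "q-1" q] u_dec[OF u] q2 by simp
  then show ?thesis using qeq by simp
qed

lemma KL:
  assumes u: "u \<in> hamming_vertices q q" and "p < q" "r < q"
  shows "(pi u = p \<and> rho u = r) \<longleftrightarrow> M p u @ [r] \<in> C"
proof -
  have pv: "pre u \<in> hamming_vertices (q-1) q" and lu: "lst u < q" using u_dec[OF u] by auto
  have lp: "length (pre u) = q - 1" using pv hv_len by blast
  note cf = cw_form[OF pv]
  have Meq: "M p u @ [r] = pre u @ [(lst u + q - p) mod q, r]" unfolding M_def by simp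
  show ?thesis
  proof
    assume a: "pi u = p \<and> rho u = r"
    then have "(lst u + q - p) mod q = A (pre u)"
      using mod_lemma1[OF cf(2) lu \<open>p<q\<close>] unfolding pi_def by simp
    then have "M p u @ [r] = cw (pre u)" using a cf(1) Meq unfolding rho_def by simp
    then show "M p u @ [r] \<in> C" using cw_prop[OF pv] by simp
  next
    assume c: "M p u @ [r] \<in> C"
    have "cw (take (q-1) (M p u @ [r])) = M p u @ [r]" by (rule cw_eq[OF c])
    moreover have "take (q-1) (M p u @ [r]) = pre u" using Meq lp by simp
    ultimately have "cw (pre u) = pre u @ [(lst u + q - p) mod q, r]" using Meq by simp
    then have "A (pre u) = (lst u + q - p) mod q" "B (pre u) = r" using cf(1) by auto
    then show "pi u = p \<and> rho u = r"
      using mod_lemma1[OF cf(2) lu \<open>p<q\<close>] unfolding pi_def rho_def by simp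
  qed
qed

lemma M_dist:
  assumes u: "u \<in> hamming_vertices q q" and u': "u' \<in> hamming_vertices q q" and p: "p < q"
  shows "hamming_dist (M p u) (M p u') = hamming_dist u u'"
proof -
  have l1: "length (pre u) = q - 1" "length (pre u') = q - 1" using u_dec u u' hv_len by blast+
  have "((lst u + q - p) mod q = (lst u' + q - p) mod q) \<longleftrightarrow> lst u = lst u'"
    using mod_lemma3[of "lst u" q p] mod_lemma3[of "lst u'" q p] u_dec u u' p by metis
  then have "hamming_dist (M p u) (M p u') = hamming_dist (pre u @ [lst u]) (pre u' @ [lst u'])"
    unfolding M_def using l1 by (simp add: hdist_snoc)
  then show ?thesis using u_dec u u' by metis
qed

lemma M_surj:
  assumes t: "t \<in> hamming_vertices q q" and p: "p < q"
  shows "pre t @ [(lst t + p) mod q] \<in> hamming_vertices q q" "M p (pre t @ [(lst t + p) mod q]) = t"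
proof -
  have l1: "length (pre t) = q - 1" using u_dec t hv_len by blast
  have "pre t @ [(lst t + p) mod q] \<in> hamming_vertices (Suc (q-1)) q"
    using hv_snoc[of "pre t" "(lst t + p) mod q" "q-1" q] u_dec[OF t] q2 by simp
  then show "pre t @ [(lst t + p) mod q] \<in> hamming_vertices q q" using qeq by simp
  show "M p (pre t @ [(lst t + p) mod q]) = t"
    unfolding M_def pre_app[OF l1] lst_app[OF l1] using mod_lemma2[of "lst t" q p] u_dec[OF t] p
    by simp
qed

lemma BL1:
  assumes u: "u \<in> hamming_vertices q q" and u': "u' \<in> hamming_vertices q q"
    and adj: "hamming_adj u u'"
  shows "pi u' \<noteq> pi u"
proof
  assume eq: "pi u' = pi u"
  let ?p = "pi u"
  have c1: "M ?p u @ [rho u] \<in> C" using KL[OF u pi_lt[of u] rho_lt[OF u]] by simp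
  have c2: "M ?p u' @ [rho u'] \<in> C" using KL[OF u' pi_lt[of u] rho_lt[OF u']] eq by simp
  have MV: "M ?p u \<in> hamming_vertices q q" "M ?p u' \<in> hamming_vertices q q" using M_V u u' by auto
  have lM: "length (M ?p u) = length (M ?p u')" using MV hv_len by metis
  have w: "M ?p u @ [rho u'] \<in> hamming_vertices (Suc q) q" using hv_snoc MV rho_lt[OF u'] by blast
  have "hamming_dist (M ?p u @ [rho u']) (M ?p u @ [rho u]) \<le> 1"
    using hdist_snoc[of "M ?p u" "M ?p u"] hdist0[of "M ?p u" "M ?p u"] by simp
  moreover have "hamming_dist (M ?p u @ [rho u']) (M ?p u' @ [rho u']) \<le> 1"
    using hdist_snoc[OF lM] M_dist[OF u u' pi_lt[of u]] adj unfolding hamming_adj_def by simp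
  ultimately have "M ?p u @ [rho u] = M ?p u' @ [rho u']" using C_uniq[OF c1 c2 w] by blast
  then have "M ?p u = M ?p u'" by simp
  then have "hamming_dist u u' = 0" using M_dist[OF u u' pi_lt[of u]] hdist0 lM by metis
  then show False using adj unfolding hamming_adj_def by simp
qed

lemma BL2:
  assumes u: "u \<in> hamming_vertices q q" and p: "p < q" and r: "r < q" and pne: "p \<noteq> pi u"
  shows "\<exists>!u'. u' \<in> hamming_vertices q q \<and> hamming_adj u u' \<and> pi u' = p \<and> rho u' = r"
proof -
  have MV: "M p u \<in> hamming_vertices q q" using M_V u by auto
  have lMu: "length (M p u) = q" using MV hv_len by blast
  have w: "M p u @ [r] \<in> hamming_vertices (Suc q) q" using hv_snoc MV r by blast
  obtain c where c: "c \<in> C" "hamming_dist (M p u @ [r]) c \<le> 1" using C_ex[OF w] by blast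
  have cv: "c \<in> hamming_vertices (Suc q) q" using c C_sub by blast
  have lc: "length c = Suc q" using cv hv_len by blast
  let ?t = "take q c"
  have cdec: "c = ?t @ [c!q]" using lc by (metis append_take_drop_id Cons_nth_drop_Suc drop_all le_refl lessI)
  have tv: "?t \<in> hamming_vertices q q" using hv_take[OF cv] by simp
  have lt: "length ?t = q" using lc by simp
  have dd: "hamming_dist (M p u @ [r]) c = hamming_dist (M p u) ?t + (if r = c!q then 0 else 1)"
    by (subst cdec, rule hdist_snoc) (use lMu lt in simp)
  have "hamming_dist (M p u) ?t \<noteq> 0"
  proof
    assume "hamming_dist (M p u) ?t = 0"
    then have "?t = M p u" using hdist0 lMu lt by metis
    then have "M p u @ [c!q] \<in> C" using c cdec by metis
    then have "pi u = p" using KL[OF u p] hv_nth[OF cv, of q] by blast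
    then show False using pne by simp
  qed
  then have d1: "hamming_dist (M p u) ?t = 1" and cq: "c!q = r" using dd c by (auto split: if_splits)
  define u' where "u' = pre ?t @ [(lst ?t + p) mod q]"
  have u'v: "u' \<in> hamming_vertices q q" and Mu': "M p u' = ?t" using M_surj[OF tv p] unfolding u'_def by auto
  have P: "pi u' = p \<and> rho u' = r" using KL[OF u'v p r] Mu' c cdec cq by metis
  have A: "hamming_adj u u'" unfolding hamming_adj_def using M_dist[OF u u'v p] Mu' d1 by simp
  show ?thesis
  proof (rule ex1I[of _ u'])
    show "u' \<in> hamming_vertices q q \<and> hamming_adj u u' \<and> pi u' = p \<and> rho u' = r" using u'v A P by blast
  next
    fix v assume v: "v \<in> hamming_vertices q q \<and> hamming_adj u v \<and> pi v = p \<and> rho v = r"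
    have cv': "M p v @ [r] \<in> C" using KL[OF _ p r] v by blast
    have cu': "M p u' @ [r] \<in> C" using KL[OF u'v p r] P by blast
    have lv: "length (M p v) = q" using M_V v hv_len by blast
    have lu': "length (M p u') = q" using M_V u'v hv_len by blast
    have "hamming_dist (M p u @ [r]) (M p v @ [r]) \<le> 1"
      using hdist_snoc[of "M p u" "M p v" r r] lMu lv M_dist[OF u _ p, of v] v unfolding hamming_adj_def by simp
    moreover have "hamming_dist (M p u @ [r]) (M p u' @ [r]) \<le> 1"
      using hdist_snoc[of "M p u" "M p u'" r r] lMu lu' M_dist[OF u u'v p] A unfolding hamming_adj_def by simp
    ultimately have "M p v @ [r] = M p u' @ [r]" using C_uniq[OF cv' cu' w] by blast
    then have "M p v = M p u'" by simp
    then have "hamming_dist v u' = 0" using M_dist[OF _ u'v p, of v] v hdist0 lv by metis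
    then show "v = u'" using hdist0 v u'v hv_len by metis
  qed
qed

lemma block_bij:
  assumes u: "u \<in> hamming_vertices q q"
  shows "bij_betw (\<lambda>u'. (pi u', rho u')) (nbrs q q u) (({..<q} - {pi u}) \<times> {..<q})"
proof (rule bij_betw_ex1)
  show "\<forall>x\<in>nbrs q q u. (pi x, rho x) \<in> ({..<q} - {pi u}) \<times> {..<q}"
    using BL1[OF u] pi_lt rho_lt unfolding nbrs_def by auto
  show "\<forall>y\<in>({..<q} - {pi u}) \<times> {..<q}. \<exists>!x. x \<in> nbrs q q u \<and> (pi x, rho x) = y"
  proof
    fix y assume y: "y \<in> ({..<q} - {pi u}) \<times> {..<q}"
    obtain p r where pr: "y = (p,r)" by fastforce
    have "\<exists>!u'. u' \<in> hamming_vertices q q \<and> hamming_adj u u' \<and> pi u' = p \<and> rho u' = r"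
      using BL2[OF u] y pr by auto
    then show "\<exists>!x. x \<in> nbrs q q u \<and> (pi x, rho x) = y" unfolding nbrs_def pr by auto
  qed
qed

lemma block_sum:
  assumes u: "u \<in> hamming_vertices q q"
  shows "(\<Sum>u'\<in>nbrs q q u. g (pi u') (rho u')) = (\<Sum>p\<in>{..<q} - {pi u}. \<Sum>r<q. g p r)"
proof -
  have "(\<Sum>u'\<in>nbrs q q u. g (pi u') (rho u')) = (\<Sum>pr\<in>({..<q} - {pi u}) \<times> {..<q}. g (fst pr) (snd pr))"
    using sum.reindex_bij_betw[OF block_bij[OF u], of "\<lambda>pr. g (fst pr) (snd pr)"] by simp
  also have "\<dots> = (\<Sum>p\<in>{..<q} - {pi u}. \<Sum>r<q. g p r)"
    by (simp add: sum.cartesian_product split_def)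
  finally show ?thesis .
qed

end


lemma sum_split_add: fixes a m :: nat shows "(\<Sum>j<a+m. h j) = (\<Sum>j<a. h j) + (\<Sum>k<m. h (a+k))"
  by (induction m) (simp_all add: add.assoc)

lemma sum_blocks: fixes q n :: nat shows "(\<Sum>j<q*n. h j) = (\<Sum>i<n. \<Sum>k<q. h (q*i+k))"
proof (induction n)
  case 0 then show ?case by simp
next
  case (Suc n)
  have "(\<Sum>j<q*Suc n. h j) = (\<Sum>j<q*n + q. h j)" by (simp add: add.commute)
  also have "\<dots> = (\<Sum>j<q*n. h j) + (\<Sum>k<q. h (q*n+k))" by (rule sum_split_add)
  finally show ?case using Suc by simp
qed

lemma mod_small:
  fixes a q :: nat
  assumes "a < 2*q"
  shows "a mod q = (if a < q then a else a - q)"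
proof (cases "a < q")
  case True then show ?thesis by simp
next
  case False
  then have "a mod q = (a - q) mod q" by (simp add: le_mod_geq)
  also have "\<dots> = a - q" using assms False by (intro mod_less) simp
  finally show ?thesis using False by simp
qed

lemma trans_inj:
  fixes q R :: nat
  assumes "q > 0"
  shows "inj_on (\<lambda>v. (R+v) mod q) {..<q}"
proof (rule inj_onI)
  fix v v' assume v: "v \<in> {..<q}" "v' \<in> {..<q}" and e: "(R+v) mod q = (R+v') mod q"
  let ?R0 = "R mod q"
  have r0: "?R0 < q" using assms by simp
  have vq: "v < q" "v' < q" using v by auto
  have e2: "(?R0+v) mod q = (?R0+v') mod q" using e by (metis mod_add_left_eq)
  have "(?R0+v) mod q = (if ?R0 + v < q then ?R0 + v else ?R0 + v - q)" by (rule mod_small) (use vq r0 in linarith)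
  moreover have "(?R0+v') mod q = (if ?R0 + v' < q then ?R0 + v' else ?R0 + v' - q)" by (rule mod_small) (use vq r0 in linarith)
  ultimately have "(if ?R0 + v < q then ?R0 + v else ?R0 + v - q) = (if ?R0 + v' < q then ?R0 + v' else ?R0 + v' - q)"
    using e2 by simp
  then show "v = v'" using v r0 by (simp split: if_splits)
qed

lemma trans_bij:
  fixes q R :: nat
  assumes "q > 0"
  shows "bij_betw (\<lambda>v. (R+v) mod q) {..<q} {..<q}"
proof -
  have i: "inj_on (\<lambda>v. (R+v) mod q) {..<q}" using trans_inj[OF assms] .
  have s: "(\<lambda>v. (R+v) mod q) ` {..<q} \<subseteq> {..<q}" using assms by auto
  have "card ((\<lambda>v. (R+v) mod q) ` {..<q}) = card {..<q::nat}" using card_image[OF i] by simp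
  then have "(\<lambda>v. (R+v) mod q) ` {..<q} = {..<q}" using card_subset_eq[OF _ s] by simp
  then show ?thesis using i unfolding bij_betw_def by simp
qed

lemma trans_sum:
  fixes q R :: nat
  assumes "q > 0"
  shows "(\<Sum>v<q. g ((R+v) mod q)) = (\<Sum>z<q. g z)"
  using sum.reindex_bij_betw[OF trans_bij[OF assms, of R], of g] by simp

lemma trans_sum_diff:
  fixes q R w :: nat and g :: "nat \<Rightarrow> nat"
  assumes "q > 0" "w < q"
  shows "(\<Sum>v\<in>{..<q}-{w}. g ((R+v) mod q)) = (\<Sum>z\<in>{..<q}-{(R+w) mod q}. g z)"
proof -
  have "(\<Sum>v\<in>{..<q}-{w}. g ((R+v) mod q)) = (\<Sum>v<q. g ((R+v) mod q)) - g ((R+w) mod q)"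
    using assms by (simp add: sum_diff1_nat)
  also have "\<dots> = (\<Sum>z<q. g z) - g ((R+w) mod q)" using trans_sum[OF assms(1), of g R] by simp
  also have "\<dots> = (\<Sum>z\<in>{..<q}-{(R+w) mod q}. g z)" using assms by (simp add: sum_diff1_nat)
  finally show ?thesis .
qed

lemma idx_inj:
  fixes q i i' k k' :: nat
  assumes "k < q" "k' < q" "q*i+k = q*i'+k'"
  shows "i = i' \<and> k = k'"
proof -
  have le: "a \<le> b" if "k2 < q" "q*a+k1 = q*b+k2" for a b k1 k2 :: nat
  proof (rule ccontr)
    assume "\<not> a \<le> b"
    then have "Suc b \<le> a" by simp
    then have "q*Suc b \<le> q*a" by (rule mult_le_mono2)
    then show False using that by simp
  qed
  have "i \<le> i'" using le[OF assms(2,3)] .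
  moreover have "i' \<le> i" using le[OF assms(1) assms(3)[symmetric]] .
  ultimately have "i = i'" by simp
  then show ?thesis using assms by simp
qed

lemma idx_lt:
  fixes q i n k m :: nat
  assumes "i < n" "k < q"
  shows "q*i+k < q*n" "q*i+k < q*n+m"
proof -
  have "q*i+k < q*i+q" using assms by simp
  also have "\<dots> = q*Suc i" by simp
  also have "\<dots> \<le> q*n" using assms by (intro mult_le_mono2) simp
  finally show "q*i+k < q*n" .
  then show "q*i+k < q*n+m" by simp
qed

context pcode begin

definition blk :: "nat list \<Rightarrow> nat \<Rightarrow> nat list" where
  "blk x i = map (\<lambda>k. x!(q*i+k)) [0..<q]"

lemma blk_nth: "k < q \<Longrightarrow> blk x i ! k = x!(q*i+k)" unfolding blk_def by simp
lemma blk_len: "length (blk x i) = q" unfolding blk_def by simp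

lemma blk_V:
  assumes "x \<in> hamming_vertices (q*n+m) q" "i < n"
  shows "blk x i \<in> hamming_vertices q q"
  unfolding hamming_vertices_def blk_def using hv_nth[OF assms(1)] idx_lt[OF assms(2)] by auto

lemma blk_upd_same:
  assumes "i < n" "k < q" "length x = q*n+m"
  shows "blk (x[q*i+k := v]) i = (blk x i)[k:=v]"
proof (rule nth_equalityI)
  show "length (blk (x[q*i+k := v]) i) = length ((blk x i)[k:=v])" by (simp add: blk_len)
  fix k' assume "k' < length (blk (x[q*i+k := v]) i)"
  then have k': "k' < q" by (simp add: blk_len)
  have lt: "q*i+k < length x" using idx_lt(2)[OF assms(1,2)] assms(3) by simp
  show "blk (x[q*i+k := v]) i ! k' = (blk x i)[k:=v] ! k'"
    using k' assms lt by (cases "k' = k") (simp_all add: blk_nth blk_len nth_list_update)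
qed

lemma blk_upd_other:
  assumes "i' \<noteq> i" "k < q"
  shows "blk (x[q*i+k := v]) i' = blk x i'"
  unfolding blk_def
proof (intro map_cong refl)
  fix k' assume "k' \<in> set [0..<q]"
  then have "q*i'+k' \<noteq> q*i+k" using idx_inj[of k' q k i' i] assms by auto
  then show "x[q*i+k := v] ! (q*i'+k') = x ! (q*i'+k')" by simp
qed

lemma blk_upd_extra:
  assumes "q*n \<le> j" "i < n"
  shows "blk (x[j := v]) i = blk x i"
  unfolding blk_def
proof (intro map_cong refl)
  fix k assume "k \<in> set [0..<q]"
  then have "q*i+k < q*n" using idx_lt(1)[OF assms(2), of k q] by simp
  then show "x[j := v] ! (q * i + k) = x ! (q * i + k)" using assms by simp
qed

definition Y :: "nat \<Rightarrow> nat list \<Rightarrow> nat list" where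
  "Y n x = map (\<lambda>i. pi (blk x i)) [0..<n]"

lemma Y_V: "Y n x \<in> hamming_vertices n q"
  unfolding Y_def hamming_vertices_def using pi_lt by auto

lemma Y_nth: "i < n \<Longrightarrow> Y n x ! i = pi (blk x i)" unfolding Y_def by simp

lemma Y_upd_block:
  assumes "i < n" "k < q" "length x = q*n+m"
  shows "Y n (x[q*i+k := v]) = (Y n x)[i := pi ((blk x i)[k:=v])]"
proof (rule nth_equalityI)
  show "length (Y n (x[q*i+k := v])) = length ((Y n x)[i := pi ((blk x i)[k:=v])])" by (simp add: Y_def)
  fix i' assume "i' < length (Y n (x[q*i+k := v]))"
  then have i': "i' < n" by (simp add: Y_def)
  show "Y n (x[q*i+k := v]) ! i' = (Y n x)[i := pi ((blk x i)[k:=v])] ! i'"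
  proof (cases "i' = i")
    case True then show ?thesis using i' assms by (simp add: Y_nth blk_upd_same Y_def)
  next
    case False then show ?thesis using i' assms by (simp add: Y_nth blk_upd_other Y_def)
  qed
qed

lemma Y_upd_extra:
  assumes "q*n \<le> j"
  shows "Y n (x[j := v]) = Y n x"
  unfolding Y_def using blk_upd_extra[OF assms] by simp

definition S :: "nat \<Rightarrow> nat \<Rightarrow> nat list \<Rightarrow> nat" where
  "S n m x = (\<Sum>i<n. rho (blk x i)) + (\<Sum>k<m. x!(q*n+k))"

definition Z :: "nat \<Rightarrow> nat \<Rightarrow> nat list \<Rightarrow> nat" where
  "Z n m x = S n m x mod q"

lemma S_upd_block:
  assumes "i < n" "k < q" "length x = q*n+m"
  shows "rho (blk x i) \<le> S n m x"
    "S n m (x[q*i+k := v]) = (S n m x - rho (blk x i)) + rho ((blk x i)[k:=v])"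
proof -
  have fin: "finite {..<n}" by simp
  have i: "i \<in> {..<n}" using assms by simp
  have s1: "(\<Sum>i'<n. rho (blk x i')) = rho (blk x i) + (\<Sum>i'\<in>{..<n}-{i}. rho (blk x i'))"
    using sum.remove[OF fin i] by simp
  have s2a: "(\<Sum>i'\<in>{..<n}-{i}. rho (blk (x[q*i+k := v]) i')) = (\<Sum>i'\<in>{..<n}-{i}. rho (blk x i'))"
    by (rule sum.cong) (auto simp: blk_upd_other[OF _ assms(2)])
  have s2: "(\<Sum>i'<n. rho (blk (x[q*i+k := v]) i')) = rho ((blk x i)[k:=v]) + (\<Sum>i'\<in>{..<n}-{i}. rho (blk x i'))"
    using sum.remove[OF fin i, of "\<lambda>i'. rho (blk (x[q*i+k := v]) i')"] blk_upd_same[OF assms] s2a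
    by simp
  have s3: "(\<Sum>k'<m. x[q*i+k := v]!(q*n+k')) = (\<Sum>k'<m. x!(q*n+k'))"
    using idx_lt[OF assms(1,2)] by (intro sum.cong) (auto simp: nth_list_update)
  show "rho (blk x i) \<le> S n m x" unfolding S_def using s1 by simp
  show "S n m (x[q*i+k := v]) = (S n m x - rho (blk x i)) + rho ((blk x i)[k:=v])"
    unfolding S_def using s1 s2 s3 by simp
qed

lemma S_upd_extra:
  assumes "k < m" and that: "length x = q*n+m"
  shows "x!(q*n+k) \<le> S n m x"
    "S n m (x[q*n+k := v]) = (S n m x - x!(q*n+k)) + v"
proof -
  have fin: "finite {..<m}" by simp
  have kk: "k \<in> {..<m}" using assms by simp
  have s1: "(\<Sum>k'<m. x!(q*n+k')) = x!(q*n+k) + (\<Sum>k'\<in>{..<m}-{k}. x!(q*n+k'))"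
    using sum.remove[OF fin kk] by simp
  have s2: "(\<Sum>k'<m. x[q*n+k := v]!(q*n+k')) = v + (\<Sum>k'\<in>{..<m}-{k}. x!(q*n+k'))"
    using sum.remove[OF fin kk, of "\<lambda>k'. x[q*n+k := v]!(q*n+k')"] that assms by (simp add: nth_list_update)
  have s3: "(\<Sum>i<n. rho (blk (x[q*n+k := v]) i)) = (\<Sum>i<n. rho (blk x i))"
    using blk_upd_extra[of n "q*n+k"] by simp
  show "x!(q*n+k) \<le> S n m x" unfolding S_def using s1 by simp
  show "S n m (x[q*n+k := v]) = (S n m x - x!(q*n+k)) + v"
    unfolding S_def using s1 s2 s3 by simp
qed

end


context pcode begin

lemma q0: "q > 0" using q2 by simp

lemma phi_sum:
  fixes g :: "nat list \<Rightarrow> nat \<Rightarrow> nat"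
  assumes x: "x \<in> hamming_vertices (q*n+m) q"
  shows "(\<Sum>x'\<in>nbrs (q*n+m) q x. g (Y n x') (Z n m x'))
       = (\<Sum>y'\<in>nbrs n q (Y n x). \<Sum>z<q. g y' z) + m * (\<Sum>z\<in>{..<q}-{Z n m x}. g (Y n x) z)"
proof -
  let ?y = "Y n x"
  have lx: "length x = q*n+m" using x hv_len by blast
  define H where "H j = (\<Sum>v\<in>{..<q}-{x!j}. g (Y n (x[j:=v])) (Z n m (x[j:=v])))" for j
  have "(\<Sum>x'\<in>nbrs (q*n+m) q x. g (Y n x') (Z n m x')) = (\<Sum>j<q*n+m. H j)"
    unfolding H_def by (rule sum_nbrs[OF x])
  also have "\<dots> = (\<Sum>j<q*n. H j) + (\<Sum>k<m. H (q*n+k))" by (rule sum_split_add)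
  also have "(\<Sum>j<q*n. H j) = (\<Sum>i<n. \<Sum>k<q. H (q*i+k))" by (rule sum_blocks)
  also have "\<dots> = (\<Sum>i<n. \<Sum>p\<in>{..<q}-{?y!i}. \<Sum>z<q. g (?y[i:=p]) z)"
  proof (rule sum.cong[OF refl])
    fix i assume "i \<in> {..<n}"
    then have i: "i < n" by simp
    define u where "u = blk x i"
    have uV: "u \<in> hamming_vertices q q" unfolding u_def using blk_V[OF x i] .
    define R where "R = S n m x - rho u"
    define G where "G u' = g (?y[i := pi u']) ((R + rho u') mod q)" for u'
    have Hk: "H (q*i+k) = (\<Sum>v\<in>{..<q}-{u!k}. G (u[k:=v]))" if k: "k < q" for k
      unfolding H_def G_def
    proof (rule sum.cong)
      show "{..<q} - {x ! (q * i + k)} = {..<q} - {u ! k}" using blk_nth[OF k] u_def by simp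
    next
      fix v assume "v \<in> {..<q} - {u ! k}"
      have "Y n (x[q*i+k := v]) = ?y[i := pi (u[k:=v])]" using Y_upd_block[OF i k lx] u_def by simp
      moreover have "Z n m (x[q*i+k := v]) = (R + rho (u[k:=v])) mod q"
        unfolding Z_def R_def using S_upd_block[OF i k lx] u_def by simp
      ultimately show "g (Y n (x[q*i+k := v])) (Z n m (x[q*i+k := v])) = g (?y[i := pi (u[k:=v])]) ((R + rho (u[k:=v])) mod q)"
        by simp
    qed
    have "(\<Sum>k<q. H (q*i+k)) = (\<Sum>k<q. \<Sum>v\<in>{..<q}-{u!k}. G (u[k:=v]))" using Hk by simp
    also have "\<dots> = (\<Sum>u'\<in>nbrs q q u. G u')" using sum_nbrs[OF uV, of G] by simp
    also have "\<dots> = (\<Sum>p\<in>{..<q}-{pi u}. \<Sum>r<q. g (?y[i:=p]) ((R + r) mod q))"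
      unfolding G_def by (rule block_sum[OF uV])
    also have "\<dots> = (\<Sum>p\<in>{..<q}-{pi u}. \<Sum>z<q. g (?y[i:=p]) z)"
      by (rule sum.cong[OF refl], rule trans_sum[OF q0])
    also have "pi u = ?y!i" using Y_nth[OF i] u_def by simp
    finally show "(\<Sum>k<q. H (q*i+k)) = (\<Sum>p\<in>{..<q}-{?y!i}. \<Sum>z<q. g (?y[i:=p]) z)" .
  qed
  also have "\<dots> = (\<Sum>y'\<in>nbrs n q ?y. \<Sum>z<q. g y' z)" using sum_nbrs[OF Y_V, of "\<lambda>y'. \<Sum>z<q. g y' z" n x] by simp
  also have "(\<Sum>k<m. H (q*n+k)) = (\<Sum>k<m. \<Sum>z\<in>{..<q}-{Z n m x}. g ?y z)"
  proof (rule sum.cong[OF refl])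
    fix k assume "k \<in> {..<m}"
    then have k: "k < m" by simp
    define w where "w = x!(q*n+k)"
    have wq: "w < q" unfolding w_def using hv_nth[OF x] k by simp
    define R where "R = S n m x - w"
    have "H (q*n+k) = (\<Sum>v\<in>{..<q}-{w}. g ?y ((R + v) mod q))"
      unfolding H_def
    proof (rule sum.cong)
      show "{..<q} - {x ! (q*n+k)} = {..<q} - {w}" using w_def by simp
    next
      fix v assume "v \<in> {..<q} - {w}"
      have "Y n (x[q*n+k := v]) = ?y" using Y_upd_extra by simp
      moreover have "Z n m (x[q*n+k := v]) = (R + v) mod q"
        unfolding Z_def R_def w_def using S_upd_extra[OF k lx] by simp
      ultimately show "g (Y n (x[q*n+k := v])) (Z n m (x[q*n+k := v])) = g ?y ((R + v) mod q)" by simp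
    qed
    also have "\<dots> = (\<Sum>z\<in>{..<q}-{(R+w) mod q}. g ?y z)" by (rule trans_sum_diff[OF q0 wq])
    also have "R + w = S n m x" unfolding R_def w_def using S_upd_extra(1)[OF k lx] by simp
    finally show "H (q*n+k) = (\<Sum>z\<in>{..<q}-{Z n m x}. g ?y z)" unfolding Z_def .
  qed
  also have "\<dots> = m * (\<Sum>z\<in>{..<q}-{Z n m x}. g ?y z)" by simp
  finally show ?thesis .
qed

end


lemma q_ge2:
  assumes "perfect_2_coloring n q f"
  shows "q \<ge> 2"
proof (rule ccontr)
  assume "\<not> q \<ge> 2"
  then have "hamming_vertices n q \<subseteq> {replicate n 0}"
    unfolding hamming_vertices_def by (auto simp: subset_iff intro!: replicate_eqI)
  then have "f ` hamming_vertices n q \<subseteq> {f (replicate n 0)}" by auto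
  moreover have "f ` hamming_vertices n q = {1,2}" using assms unfolding perfect_2_coloring_def by simp
  ultimately show False by auto
qed

lemma deg_sum:
  assumes fv: "\<forall>y\<in>hamming_vertices n q. f y \<in> {1,2::nat}" and y: "y \<in> hamming_vertices n q"
  shows "nbr_count n q f y 1 + nbr_count n q f y 2 = n*(q-1)"
proof -
  have "nbr_count n q f y 1 + nbr_count n q f y 2
      = (\<Sum>y'\<in>nbrs n q y. (if f y' = 1 then 1 else 0) + (if f y' = 2 then 1 else 0))"
    unfolding nbr_count_sum by (simp add: sum.distrib)
  also have "\<dots> = (\<Sum>y'\<in>nbrs n q y. 1)"
    by (rule sum.cong[OF refl]) (use fv in \<open>auto simp: nbrs_def\<close>)
  also have "\<dots> = n*(q-1)" using card_nbrs[OF y] by simp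
  finally show ?thesis .
qed

lemma cnt_pos:
  assumes "z \<in> hamming_vertices n q" "hamming_adj y z" "f z = j"
  shows "nbr_count n q f y j > 0"
proof -
  have "finite {y' \<in> hamming_vertices n q. hamming_adj y y' \<and> f y' = j}" using finite_hv by simp
  moreover have "z \<in> {y' \<in> hamming_vertices n q. hamming_adj y y' \<and> f y' = j}" using assms by simp
  ultimately show ?thesis unfolding nbr_count_def by (metis card_gt_0_iff empty_iff)
qed

lemma adj_sym:
  assumes "y \<in> hamming_vertices n q" "z \<in> hamming_vertices n q" "hamming_adj y z"
  shows "hamming_adj z y"
  using assms hdist_sym[of y z] hv_len unfolding hamming_adj_def by metis

lemma conn:
  assumes fv: "\<forall>y\<in>hamming_vertices n q. f y \<in> {1,2::nat}"
    and y: "y \<in> hamming_vertices n q" "f y = 1" and y': "y' \<in> hamming_vertices n q" "f y' = 2"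
  shows "\<exists>z z'. z \<in> hamming_vertices n q \<and> z' \<in> hamming_vertices n q \<and> hamming_adj z z' \<and> f z = 1 \<and> f z' = 2"
proof (rule ccontr)
  assume nex: "\<not> ?thesis"
  define w where "w k = take k y' @ drop k y" for k
  have ly: "length y = n" "length y' = n" using y y' hv_len by blast+
  have wV: "w k \<in> hamming_vertices n q" for k
    using y y' ly unfolding w_def hamming_vertices_def
    by (auto dest: in_set_takeD in_set_dropD)
  have wS: "w (Suc k) = (w k)[k := y'!k]" if k: "k < n" for k
  proof -
    have "take (Suc k) y' = take k y' @ [y'!k]" using k ly by (simp add: take_Suc_conv_app_nth)
    moreover have "drop k y = y!k # drop (Suc k) y" using k ly by (simp add: Cons_nth_drop_Suc)
    moreover have "length (take k y') = k" using k ly by simp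
    ultimately show ?thesis unfolding w_def by (simp add: list_update_append)
  qed
  have "k \<le> n \<Longrightarrow> f (w k) = 1" for k
  proof (induction k)
    case 0 then show ?case using y unfolding w_def by simp
  next
    case (Suc k)
    then have k: "k < n" and IH: "f (w k) = 1" by auto
    show ?case
    proof (cases "y'!k = w k ! k")
      case True
      then have "w (Suc k) = w k" using wS[OF k] by simp
      then show ?thesis using IH by simp
    next
      case False
      have lw: "length (w k) = n" using wV hv_len by blast
      have "hamming_adj (w k) (w (Suc k))" unfolding hamming_adj_def wS[OF k]
        using hdist_upd[of k "w k" "y'!k"] k lw False by simp
      then have "f (w (Suc k)) \<noteq> 2" using nex wV IH by blast
      then show ?thesis using fv wV by blast
    qed
  qed
  then have "f (w n) = 1" by simp
  moreover have "w n = y'" unfolding w_def using ly by simp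
  ultimately show False using y' by simp
qed

lemma sum_ind1:
  fixes t q :: nat
  assumes "t \<le> q"
  shows "(\<Sum>z<q. if z < t then 1 else 0) = t" "(\<Sum>z<q. if z < t then 0 else 1) = q - t"
proof -
  have "(\<Sum>z<q. if z < t then 1 else 0) = card {z\<in>{..<q}. z < t}"
    by (simp add: sum.inter_filter[symmetric])
  also have "{z\<in>{..<q}. z < t} = {..<t}" using assms by auto
  finally show "(\<Sum>z<q. if z < t then 1 else 0) = t" by simp
  have "(\<Sum>z<q. if z < t then 0 else 1) = (\<Sum>z<q. if \<not> z < t then 1 else 0)"
    by (rule sum.cong) auto
  also have "\<dots> = card {z\<in>{..<q}. \<not> z < t}"
    by (simp only: sum.inter_filter[symmetric] finite_lessThan) simp
  also have "{z\<in>{..<q}. \<not> z < t} = {t..<q}" using assms by auto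
  finally show "(\<Sum>z<q. if z < t then 0 else 1) = q - t" by simp
qed



definition tt :: "nat \<Rightarrow> nat \<Rightarrow> nat \<Rightarrow> nat" where
  "tt t1 t2 c0 = (if c0 = 1 then t1 else t2)"

definition hh :: "nat \<Rightarrow> nat \<Rightarrow> nat \<Rightarrow> nat \<Rightarrow> nat \<Rightarrow> nat" where
  "hh q t1 t2 j c0 = (if j = 1 then tt t1 t2 c0 else q - tt t1 t2 c0)"

lemma arith1:
  fixes q t1 t2 b c :: nat
  assumes "t1 \<le> q" "t2 \<le> q"
  shows "(q-t1)*c + (q-t2)*b = q*(b+c) - (c*t1+b*t2)"
proof -
  have l1: "c*t1 \<le> c*q" "b*t2 \<le> b*q" using assms by (simp_all add: mult_le_mono2)
  have le: "c*t1+b*t2 \<le> q*(b+c)" using add_le_mono[OF l1] by (simp add: algebra_simps)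
  have "int (q*(b+c) - (c*t1+b*t2)) = int q * (int b + int c) - (int c * int t1 + int b * int t2)"
    using le by (simp add: of_nat_diff)
  moreover have "int ((q-t1)*c + (q-t2)*b) = (int q - int t1) * int c + (int q - int t2) * int b"
    using assms by (simp add: of_nat_diff)
  ultimately have "int ((q-t1)*c + (q-t2)*b) = int (q*(b+c) - (c*t1+b*t2))" by (simp add: algebra_simps)
  then show ?thesis by (simp only: of_nat_eq_iff)
qed

context pcode begin

definition Fc :: "nat \<Rightarrow> nat \<Rightarrow> (nat list \<Rightarrow> nat) \<Rightarrow> nat \<Rightarrow> nat \<Rightarrow> nat list \<Rightarrow> nat" where
  "Fc n m f t1 t2 x = (if Z n m x < tt t1 t2 (f (Y n x)) then 1 else 2)"

lemma Fc_vals: "Fc n m f t1 t2 x \<in> {1,2}" unfolding Fc_def by simp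

lemma count_F:
  assumes x: "x \<in> hamming_vertices (q*n+m) q"
    and fv: "\<forall>y\<in>hamming_vertices n q. f y \<in> {1,2::nat}"
    and t: "t1 \<le> q" "t2 \<le> q" and j: "j \<in> {1,2}" and ne: "Fc n m f t1 t2 x \<noteq> j"
  shows "nbr_count (q*n+m) q (Fc n m f t1 t2) x j
       = hh q t1 t2 j 1 * nbr_count n q f (Y n x) 1 + hh q t1 t2 j 2 * nbr_count n q f (Y n x) 2
         + m * hh q t1 t2 j (f (Y n x))"
proof -
  let ?y = "Y n x"
  define G where "G y' z = (if (if z < tt t1 t2 (f y') then 1 else 2) = j then 1 else (0::nat))" for y' z
  have ttq: "tt t1 t2 c0 \<le> q" for c0 using t unfolding tt_def by simp
  have sumG: "(\<Sum>z<q. G y' z) = hh q t1 t2 j (f y')" for y'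
  proof (cases "j = 1")
    case True
    then have "(\<Sum>z<q. G y' z) = (\<Sum>z<q. if z < tt t1 t2 (f y') then 1 else 0)"
      unfolding G_def by (intro sum.cong) auto
    then show ?thesis using sum_ind1(1)[OF ttq] True unfolding hh_def by simp
  next
    case False
    then have j2: "j = 2" using j by simp
    then have "(\<Sum>z<q. G y' z) = (\<Sum>z<q. if z < tt t1 t2 (f y') then 0 else 1)"
      unfolding G_def by (intro sum.cong) auto
    then show ?thesis using sum_ind1(2)[OF ttq] j2 unfolding hh_def by simp
  qed
  have "nbr_count (q*n+m) q (Fc n m f t1 t2) x j = (\<Sum>x'\<in>nbrs (q*n+m) q x. G (Y n x') (Z n m x'))"
    unfolding nbr_count_sum G_def Fc_def by simp
  also have "\<dots> = (\<Sum>y'\<in>nbrs n q ?y. \<Sum>z<q. G y' z) + m * (\<Sum>z\<in>{..<q}-{Z n m x}. G ?y z)"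
    by (rule phi_sum[OF x])
  also have "(\<Sum>z\<in>{..<q}-{Z n m x}. G ?y z) = hh q t1 t2 j (f ?y)"
  proof -
    have zq: "Z n m x < q" unfolding Z_def using q0 by simp
    have "G ?y (Z n m x) = 0" using ne unfolding G_def Fc_def by auto
    then show ?thesis using zq sumG[of ?y] by (simp add: sum_diff1_nat)
  qed
  also have "(\<Sum>y'\<in>nbrs n q ?y. \<Sum>z<q. G y' z) = (\<Sum>y'\<in>nbrs n q ?y. hh q t1 t2 j 1 * (if f y' = 1 then 1 else 0) + hh q t1 t2 j 2 * (if f y' = 2 then 1 else 0))"
  proof (rule sum.cong[OF refl])
    fix y' assume "y' \<in> nbrs n q ?y"
    then have "f y' \<in> {1,2}" using fv unfolding nbrs_def by auto
    then show "(\<Sum>z<q. G y' z) = hh q t1 t2 j 1 * (if f y' = 1 then 1 else 0) + hh q t1 t2 j 2 * (if f y' = 2 then 1 else 0)"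
      using sumG[of y'] by auto
  qed
  also have "\<dots> = hh q t1 t2 j 1 * nbr_count n q f ?y 1 + hh q t1 t2 j 2 * nbr_count n q f ?y 2"
    unfolding nbr_count_sum by (simp add: sum.distrib sum_distrib_left)
  finally show ?thesis .
qed

end


lemma cnt_ex:
  assumes "nbr_count n q f y j > 0"
  shows "\<exists>y'\<in>hamming_vertices n q. f y' = j"
proof -
  have "{y' \<in> hamming_vertices n q. hamming_adj y y' \<and> f y' = j} \<noteq> {}"
    using assms unfolding nbr_count_def by (metis card.empty less_irrefl)
  then show ?thesis by blast
qed

theorem theorem6:
  fixes n q b c t1 t2 :: nat and f :: "nat list \<Rightarrow> nat"
  assumes "\<exists>C. perfect_code_1 (q + 1) q C"
    and "bc_coloring n q b c f"
    and "main_eigenvalue n q b c \<le> 0"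
    and "t1 \<le> q" and "t2 \<le> q"
    and "t1 + t2 \<notin> {0, 2 * q}"
  shows "\<exists>F. bc_coloring (nat (int q * int n - main_eigenvalue n q b c)) q
                (q * (b + c) - (c * t1 + b * t2)) (c * t1 + b * t2) F
           \<and> main_eigenvalue (nat (int q * int n - main_eigenvalue n q b c)) q
                (q * (b + c) - (c * t1 + b * t2)) (c * t1 + b * t2) = main_eigenvalue n q b c"
proof -
  obtain C where C: "perfect_code_1 (q + 1) q C" using assms(1) by blast
  have p2: "perfect_2_coloring n q f"
    and bprop: "\<forall>x\<in>hamming_vertices n q. f x = 1 \<longrightarrow> nbr_count n q f x 2 = b"
    and cprop: "\<forall>x\<in>hamming_vertices n q. f x = 2 \<longrightarrow> nbr_count n q f x 1 = c"
    using assms(2) unfolding bc_coloring_def by auto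
  have q2: "q \<ge> 2" using q_ge2[OF p2] .
  interpret pcode q C using C q2 by unfold_locales simp_all
  have fimg: "f ` hamming_vertices n q = {1,2}" using p2 unfolding perfect_2_coloring_def by simp
  have fv: "\<forall>y\<in>hamming_vertices n q. f y \<in> {1,2::nat}" using fimg by blast
  obtain y1 where y1: "y1 \<in> hamming_vertices n q" "f y1 = 1" using fimg by (metis imageE insertI1)
  obtain y2 where y2: "y2 \<in> hamming_vertices n q" "f y2 = 2" using fimg by (metis imageE insertI1 insertI2)
  obtain z z' where zz: "z \<in> hamming_vertices n q" "z' \<in> hamming_vertices n q" "hamming_adj z z'" "f z = 1" "f z' = 2"
    using conn[OF fv y1 y2] by blast
  have bpos: "b > 0" using cnt_pos[of z' n q z f 2, OF zz(2) zz(3) zz(5)] bprop zz by simp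
  have cpos: "c > 0" using cnt_pos[of z n q z' f 1, OF zz(1) adj_sym[OF zz(1,2,3)] zz(4)] cprop zz by simp
  define K where "K = n*(q-1)"
  have intK: "int K = int n * (int q - 1)" unfolding K_def using q2 by (simp add: of_nat_diff)
  have Kle: "K \<le> b + c"
  proof -
    have "int K - (int b + int c) \<le> 0" using assms(3) intK unfolding main_eigenvalue_def by simp
    then show ?thesis by simp
  qed
  define m where "m = b + c - K"
  have intm: "int m = int b + int c - int K" unfolding m_def using Kle by (simp add: of_nat_diff)
  have Neq: "nat (int q * int n - main_eigenvalue n q b c) = q*n + m"
  proof -
    have h: "int q * int n - main_eigenvalue n q b c = int (q*n+m)"
      unfolding main_eigenvalue_def using intK intm by simp
    show ?thesis unfolding h by (rule nat_int)
  qed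
  define c' where "c' = c*t1 + b*t2"
  define b' where "b' = q*(b+c) - c'"
  have b'eq: "b' = (q-t1)*c + (q-t2)*b" unfolding b'_def c'_def using arith1[OF assms(4,5)] by simp
  have c'le: "c' \<le> q*(b+c)"
  proof -
    have l1: "c*t1 \<le> c*q" "b*t2 \<le> b*q" using assms(4,5) by (simp_all add: mult_le_mono2)
    show ?thesis unfolding c'_def using add_le_mono[OF l1] by (simp add: algebra_simps)
  qed
  define N where "N = q*n+m"
  define F where "F = Fc n m f t1 t2"
  have Fv: "\<forall>x\<in>hamming_vertices N q. F x \<in> {1,2::nat}" unfolding F_def using Fc_vals by blast
  have degN: "nbr_count N q F x 1 + nbr_count N q F x 2 = N*(q-1)" if "x \<in> hamming_vertices N q" for x
    using deg_sum[OF Fv that] .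
  have cnt21: "nbr_count N q F x 1 = c'" if x: "x \<in> hamming_vertices N q" "F x = 2" for x
  proof -
    let ?y = "Y n x"
    have yV: "?y \<in> hamming_vertices n q" using Y_V .
    have e: "nbr_count N q F x 1 = t1 * nbr_count n q f ?y 1 + t2 * nbr_count n q f ?y 2 + m * tt t1 t2 (f ?y)"
      using count_F[of x n m f t1 t2 1] x fv assms(4,5) unfolding N_def F_def hh_def tt_def by simp
    have d: "nbr_count n q f ?y 1 + nbr_count n q f ?y 2 = K" using deg_sum[OF fv yV] K_def by simp
    show ?thesis
    proof (cases "f ?y = 1")
      case True
      then have "nbr_count n q f ?y 2 = b" using bprop yV by blast
      then have "nbr_count n q f ?y 1 + m = c" using d Kle unfolding m_def by simp
      moreover have "t1 * nbr_count n q f ?y 1 + t2 * b + m * t1 = t1 * (nbr_count n q f ?y 1 + m) + t2 * b"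
        by (simp add: algebra_simps)
      ultimately show ?thesis using e True \<open>nbr_count n q f ?y 2 = b\<close> unfolding c'_def tt_def
        by (simp add: mult.commute)
    next
      case False
      then have f2: "f ?y = 2" using fv yV by blast
      then have "nbr_count n q f ?y 1 = c" using cprop yV by blast
      then have "nbr_count n q f ?y 2 + m = b" using d Kle unfolding m_def by simp
      moreover have "t1 * c + t2 * nbr_count n q f ?y 2 + m * t2 = t1 * c + t2 * (nbr_count n q f ?y 2 + m)"
        by (simp add: algebra_simps)
      ultimately show ?thesis using e f2 \<open>nbr_count n q f ?y 1 = c\<close> unfolding c'_def tt_def
        by (simp add: mult.commute)
    qed
  qed
  have cnt12: "nbr_count N q F x 2 = b'" if x: "x \<in> hamming_vertices N q" "F x = 1" for x
  proof -
    let ?y = "Y n x"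
    have yV: "?y \<in> hamming_vertices n q" using Y_V .
    have e: "nbr_count N q F x 2 = (q - t1) * nbr_count n q f ?y 1 + (q - t2) * nbr_count n q f ?y 2 + m * (q - tt t1 t2 (f ?y))"
      using count_F[of x n m f t1 t2 2] x fv assms(4,5) unfolding N_def F_def hh_def tt_def by simp
    have d: "nbr_count n q f ?y 1 + nbr_count n q f ?y 2 = K" using deg_sum[OF fv yV] K_def by simp
    show ?thesis
    proof (cases "f ?y = 1")
      case True
      then have "nbr_count n q f ?y 2 = b" using bprop yV by blast
      then have "nbr_count n q f ?y 1 + m = c" using d Kle unfolding m_def by simp
      moreover have "(q-t1) * nbr_count n q f ?y 1 + (q-t2) * b + m * (q-t1) = (q-t1) * (nbr_count n q f ?y 1 + m) + (q-t2) * b"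
        by (simp add: algebra_simps)
      ultimately show ?thesis using e True \<open>nbr_count n q f ?y 2 = b\<close> unfolding b'eq tt_def
        by (simp add: mult.commute)
    next
      case False
      then have f2: "f ?y = 2" using fv yV by blast
      then have "nbr_count n q f ?y 1 = c" using cprop yV by blast
      then have "nbr_count n q f ?y 2 + m = b" using d Kle unfolding m_def by simp
      moreover have "(q-t1) * c + (q-t2) * nbr_count n q f ?y 2 + m * (q-t2) = (q-t1) * c + (q-t2) * (nbr_count n q f ?y 2 + m)"
        by (simp add: algebra_simps)
      ultimately show ?thesis using e f2 \<open>nbr_count n q f ?y 1 = c\<close> unfolding b'eq tt_def
        by (simp add: mult.commute)
    qed
  qed
  have b'pos: "b' > 0"
  proof -
    have "t1 < q \<or> t2 < q" using assms(4,5,6) by auto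
    then show ?thesis unfolding b'eq using bpos cpos by auto
  qed
  have c'pos: "c' > 0"
  proof -
    have "t1 > 0 \<or> t2 > 0" using assms(6) by auto
    then show ?thesis unfolding c'_def using bpos cpos by auto
  qed
  have x0: "replicate N 0 \<in> hamming_vertices N q" unfolding hamming_vertices_def using q2 by auto
  have ex12: "(\<exists>x\<in>hamming_vertices N q. F x = 1) \<and> (\<exists>x\<in>hamming_vertices N q. F x = 2)"
  proof (cases "F (replicate N 0) = 1")
    case True
    then show ?thesis using cnt_ex[of N q F "replicate N 0" 2] cnt12[OF x0 True] b'pos x0 by auto
  next
    case False
    then have "F (replicate N 0) = 2" using Fv x0 by blast
    then show ?thesis using cnt_ex[of N q F "replicate N 0" 1] cnt21[OF x0] c'pos x0 by auto
  qed
  have Fimg: "F ` hamming_vertices N q = {1,2}"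
  proof
    show "F ` hamming_vertices N q \<subseteq> {1,2}" using Fv by blast
    show "{1,2} \<subseteq> F ` hamming_vertices N q" using ex12 by (metis empty_subsetI image_eqI insert_subset)
  qed
  have P2: "perfect_2_coloring N q F"
    unfolding perfect_2_coloring_def
  proof (intro conjI Fimg ballI)
    fix i j :: nat assume i: "i \<in> {1,2}" and j: "j \<in> {1,2}"
    show "\<exists>mm. \<forall>x\<in>hamming_vertices N q. F x = i \<longrightarrow> nbr_count N q F x j = mm"
    proof (cases "i = 1")
      case True
      show ?thesis
      proof (cases "j = 1")
        case True
        show ?thesis
        proof (intro exI[of _ "N*(q-1) - b'"] ballI impI)
          fix x assume "x \<in> hamming_vertices N q" "F x = i"
          then show "nbr_count N q F x j = N*(q-1) - b'" using \<open>i = 1\<close> True degN[of x] cnt12[of x] by simp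
        qed
      next
        case False
        then have "j = 2" using j by simp
        then show ?thesis using \<open>i = 1\<close> cnt12 by blast
      qed
    next
      case False
      then have i2: "i = 2" using i by simp
      show ?thesis
      proof (cases "j = 1")
        case True
        then show ?thesis using i2 cnt21 by blast
      next
        case False
        then have "j = 2" using j by simp
        show ?thesis
        proof (intro exI[of _ "N*(q-1) - c'"] ballI impI)
          fix x assume "x \<in> hamming_vertices N q" "F x = i"
          then show "nbr_count N q F x j = N*(q-1) - c'" using i2 \<open>j = 2\<close> degN[of x] cnt21[of x] by simp
        qed
      qed
    qed
  qed
  have BC: "bc_coloring N q b' c' F"
    unfolding bc_coloring_def using P2 cnt12 cnt21 by blast
  have EV: "main_eigenvalue N q b' c' = main_eigenvalue n q b c"
  proof -
    have "int b' + int c' = int q * (int b + int c)" unfolding b'_def using c'le by (simp add: of_nat_diff)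
    moreover have "int N = int q * int n + int m" unfolding N_def by simp
    ultimately have "main_eigenvalue N q b' c' = (int q * int n + int m) * (int q - 1) - int q * (int b + int c)"
      unfolding main_eigenvalue_def by simp
    also have "\<dots> = int n * (int q - 1) - (int b + int c)"
      unfolding intm intK by (simp add: algebra_simps)
    finally show ?thesis unfolding main_eigenvalue_def .
  qed
  show ?thesis
    using BC EV unfolding Neq N_def[symmetric] b'_def[symmetric] c'_def[symmetric] by blast
qed


end
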